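(* Let $\vartheta_2,\vartheta_3,\vartheta_4,\eta$ be functions of $\tau$ (with $\vartheta_2\vartheta_3\vartheta_4\neq0$) satisfying $$\frac{d\vartheta_2}{d\tau}=\frac{i}{\pi}\Big\{\eta+\frac{\pi^2}{12}(\vartheta_3^4+\vartheta_4^4)\Big\}\vartheta_2,\quad \frac{d\vartheta_4}{d\tau}=\frac{i}{\pi}\Big\{\eta-\frac{\pi^2}{12}(\vartheta_2^4+\vartheta_3^4)\Big\}\vartheta_4,$$ $$\frac{d\vartheta_3}{d\tau}=\frac{i}{\pi}\Big\{\eta+\frac{\pi^2}{12}(\vartheta_2^4-\vartheta_4^4)\Big\}\vartheta_3,\quad \frac{d\eta}{d\tau}=\frac{i}{\pi}\Big\{2\eta^2-\frac{\pi^4}{12^2}(\vartheta_2^8+\vartheta_3^8+\vartheta_4^8)\Big\}.$$ Then the quantity $\mathfrak{A}^4$ defined by $(\mathfrak{A}^4-1)\vartheta_2^4\vartheta_3^4\vartheta_4^4=(\vartheta_3^4-\vartheta_2^4-\vartheta_4^4)^3$ is constant in $\tau$; i.e. this relation is an algebraic integral of the system. *)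

theory Defs
  imports "HOL-Analysis.Analysis"
begin

end

theory Submission
  imports Defs
begin

theorem proposition7p3:
  fixes t2 t3 t4 eta :: "complex \<Rightarrow> complex" and S :: "complex set"
  assumes "open S" and "connected S"
    and nz: "\<And>\<tau>. \<tau> \<in> S \<Longrightarrow> t2 \<tau> * t3 \<tau> * t4 \<tau> \<noteq> 0"
    and d2: "\<And>\<tau>. \<tau> \<in> S \<Longrightarrow> (t2 has_field_derivative
        (\<i> / pi) * (eta \<tau> + pi^2 / 12 * (t3 \<tau> ^ 4 + t4 \<tau> ^ 4)) * t2 \<tau>) (at \<tau>)"
    and d4: "\<And>\<tau>. \<tau> \<in> S \<Longrightarrow> (t4 has_field_derivative
        (\<i> / pi) * (eta \<tau> - pi^2 / 12 * (t2 \<tau> ^ 4 + t3 \<tau> ^ 4)) * t4 \<tau>) (at \<tau>)"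
    and d3: "\<And>\<tau>. \<tau> \<in> S \<Longrightarrow> (t3 has_field_derivative
        (\<i> / pi) * (eta \<tau> + pi^2 / 12 * (t2 \<tau> ^ 4 - t4 \<tau> ^ 4)) * t3 \<tau>) (at \<tau>)"
    and de: "\<And>\<tau>. \<tau> \<in> S \<Longrightarrow> (eta has_field_derivative
        (\<i> / pi) * (2 * eta \<tau> ^ 2 - pi^4 / 12^2 * (t2 \<tau> ^ 8 + t3 \<tau> ^ 8 + t4 \<tau> ^ 8))) (at \<tau>)"
  shows "\<exists>A4::complex. \<forall>\<tau>\<in>S.
           (A4 - 1) * t2 \<tau> ^ 4 * t3 \<tau> ^ 4 * t4 \<tau> ^ 4 = (t3 \<tau> ^ 4 - t2 \<tau> ^ 4 - t4 \<tau> ^ 4) ^ 3"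
proof -
  define u where "u = (\<lambda>\<tau>. t3 \<tau> ^ 4 - t2 \<tau> ^ 4 - t4 \<tau> ^ 4)"
  define P where "P = (\<lambda>\<tau>. t2 \<tau> ^ 4 * t3 \<tau> ^ 4 * t4 \<tau> ^ 4)"
  define g where "g = (\<lambda>\<tau>. u \<tau> ^ 3 / P \<tau>)"
  define k :: complex where "k = \<i> / pi"
  define q :: complex where "q = pi^2/12"
  have d2': "(t2 has_field_derivative k * (eta \<tau> + q * (t3 \<tau> ^ 4 + t4 \<tau> ^ 4)) * t2 \<tau>) (at \<tau>)" if "\<tau> \<in> S" for \<tau>
    using d2[OF that] by (simp add: k_def q_def)
  have d3': "(t3 has_field_derivative k * (eta \<tau> + q * (t2 \<tau> ^ 4 - t4 \<tau> ^ 4)) * t3 \<tau>) (at \<tau>)" if "\<tau> \<in> S" for \<tau>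
    using d3[OF that] by (simp add: k_def q_def)
  have d4': "(t4 has_field_derivative k * (eta \<tau> - q * (t2 \<tau> ^ 4 + t3 \<tau> ^ 4)) * t4 \<tau>) (at \<tau>)" if "\<tau> \<in> S" for \<tau>
    using d4[OF that] by (simp add: k_def q_def)
  have D: "(g has_field_derivative 0) (at \<tau>)" if \<tau>: "\<tau> \<in> S" for \<tau>
  proof -
    have P0: "P \<tau> \<noteq> 0" using nz[OF \<tau>] by (simp add: P_def)
    have du: "((\<lambda>\<tau>. u \<tau> ^ 3) has_field_derivative 12 * k * eta \<tau> * u \<tau> ^ 3) (at \<tau>)"
      unfolding u_def
      apply (rule derivative_eq_intros d2'[OF \<tau>] d3'[OF \<tau>] d4'[OF \<tau>] refl)+
      apply simp by algebra
    have dP: "(P has_field_derivative 12 * k * eta \<tau> * P \<tau>) (at \<tau>)"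
      unfolding P_def
      apply (rule derivative_eq_intros d2'[OF \<tau>] d3'[OF \<tau>] d4'[OF \<tau>] refl)+
      apply simp by algebra
    have "(g has_field_derivative ((12 * k * eta \<tau> * u \<tau> ^ 3) * P \<tau> - u \<tau> ^ 3 * (12 * k * eta \<tau> * P \<tau>)) / (P \<tau> * P \<tau>)) (at \<tau>)"
      unfolding g_def by (rule DERIV_divide[OF du dP P0])
    then show ?thesis by simp
  qed
  show ?thesis
  proof (cases "S = {}")
    case True then show ?thesis by simp
  next
    case False
    then obtain \<tau>0 where "\<tau>0 \<in> S" by blast
    have "continuous_on S g"
      using D by (meson DERIV_continuous continuous_at_imp_continuous_on)
    then obtain c where c: "\<And>x. x \<in> S \<Longrightarrow> g x = c"
      using DERIV_zero_connected_constant[of S "{}" g] assms(1,2) D by auto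
    show ?thesis
    proof (intro exI ballI)
      fix \<tau> assume \<tau>: "\<tau> \<in> S"
      have P0: "P \<tau> \<noteq> 0" using nz[OF \<tau>] by (simp add: P_def)
      have "u \<tau> ^ 3 = c * P \<tau>" using c[OF \<tau>] P0 by (simp add: g_def field_simps)
      then show "(c + 1 - 1) * t2 \<tau> ^ 4 * t3 \<tau> ^ 4 * t4 \<tau> ^ 4 = (t3 \<tau> ^ 4 - t2 \<tau> ^ 4 - t4 \<tau> ^ 4) ^ 3"
        by (simp add: u_def P_def mult.assoc)
    qed
  qed
qed

end
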